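(* Let $\hat{\omega}_1,\hat{\omega}_2,\dots$ be the discretized frequencies (defined in the context, with $d=1$, base offset $a\ge 0$ and spacing $l>0$), regarded as independent random variables, and suppose that $\kappa_i:=\mathbb{E}\hat{\omega}_i=0$ for every $i$. Let $\zeta_i^2=\mathrm{Var}(\hat{\omega}_i)$, $s_n=\sqrt{\sum_{i=1}^n\zeta_i^2}$, $S_n=\sum_{i=1}^n\hat{\omega}_i$ and $S_n'=S_n/s_n$. Then, as $n\to\infty$, $$D_{KL}(S_n')=\frac12\log(2\pi\mathrm{e})-\Big[H(S_n)-\log\frac{s_n}{l}\Big]+O\Big(\frac{1}{s_n}\Big),$$ where, for every $n\ge1$, the error term is bounded in absolute value by $\frac{l}{s_n}+\frac{l^2}{2s_n^2}$. Moreover, if $U$ is a random variable uniform on $(-1/2,1/2)$ and independent of $\{\hat{\omega}_i\}$, then as $n\to\infty$, $$D_{KL}(S_n')=D_{KL}\Big(S_n'+\frac{l}{s_n}U\Big)+O\Big(\frac1{s_n}\Big),$$ where the error term is bounded in absolute value by $\frac{l}{s_n}+\frac{13 l^2}{24 s_n^2}$.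
   Context: Model: let $(\Omega,\mathcal F,\mathbb P)$ be a probability space, $\{\xi_t\}_{t\ge0}$ and $\{\eta_t\}_{t\ge0}$ independent real stochastic processes, each either a Wiener process or a Lévy process whose Lévy measure $\nu$ satisfies $\int_{\mathbb R\setminus\{0\}}|z|^2\nu(dz)<\infty$; let $\omega:\mathbb R\to\mathbb R$ be bounded and continuous, $(\theta_0,I_0)$ initial values with $\mathbb E\theta_0^2<\infty$, and $\theta_t=\theta_0+\int_0^t\omega(I_s)\,ds+\eta_t$, $I_t=I_0+\xi_t$ (the angle is taken in its lift to $\mathbb R$). For fixed $a\ge0$, $l>0$, set $\hat{\omega}_n=a+l\cdot\mathrm{round}\big((\theta_n/n-a)/l\big)$, $n\ge1$, where $\mathrm{round}(x)$ is the nearest integer to $x$; these take values in $\{a+kl:k\in\mathbb Z\}$ and have finite variances. Entropies: for a discrete random variable $Y$ with mass function $p$, $H(Y)=-\sum_y p(y)\log p(y)$; for a lattice-valued $Y$ with values in $\{b+k\delta:k\in\mathbb Z\}$, mean $\mu$ and variance $\sigma^2$, $D_{KL}(Y)=\sum_y p(y)\log\frac{p(y)}{q(y)}$ where $q(b+k\delta)=\int_{b+k\delta}^{b+(k+1)\delta}\phi(y)dy$ and $\phi$ is the density of $\mathcal N(\mu,\sigma^2)$ (here $S_n'$ takes values in $\{(na+kl)/s_n:k\in\mathbb Z\}$). For a continuous random variable $X$ with density $f$, mean $\mu$ and variance $\sigma^2$, $h(X)=-\int f\log f$ and $D_{KL}(X)=\int f\log(f/g)=\frac12\log(2\pi\mathrm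 e\sigma^2)-h(X)$, with $g$ the $\mathcal N(\mu,\sigma^2)$ density. *)

theory Defs
  imports "HOL-Probability.Probability"
begin

definition rv_mean :: "'a measure \<Rightarrow> ('a \<Rightarrow> real) \<Rightarrow> real" where
  "rv_mean M Y = (\<integral>\<omega>. Y \<omega> \<partial>M)"

definition rv_var :: "'a measure \<Rightarrow> ('a \<Rightarrow> real) \<Rightarrow> real" where
  "rv_var M Y = (\<integral>\<omega>. (Y \<omega> - rv_mean M Y)\<^sup>2 \<partial>M)"

definition pmass :: "'a measure \<Rightarrow> ('a \<Rightarrow> real) \<Rightarrow> real \<Rightarrow> real" where
  "pmass M Y y = measure M {\<omega> \<in> space M. Y \<omega> = y}"

text \<open>Shannon entropy H(Y) = - sum_y p(y) log p(y) of a discrete random variable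
  (natural logarithm; terms with p(y) = 0 vanish).\<close>
definition disc_entropy :: "'a measure \<Rightarrow> ('a \<Rightarrow> real) \<Rightarrow> real" where
  "disc_entropy M Y = (\<Sum>\<^sub>\<infinity>y. - pmass M Y y * ln (pmass M Y y))"

definition dkl_lattice :: "'a measure \<Rightarrow> ('a \<Rightarrow> real) \<Rightarrow> real \<Rightarrow> real \<Rightarrow> real" where
  "dkl_lattice M Y b \<delta> =
     (\<Sum>\<^sub>\<infinity>k::int.
        pmass M Y (b + of_int k * \<delta>) *
        ln (pmass M Y (b + of_int k * \<delta>) /
            (LBINT x = b + of_int k * \<delta> .. b + (of_int k + 1) * \<delta>.
               normal_density (rv_mean M Y) (sqrt (rv_var M Y)) x)))"

text \<open>D_KL of a continuous random variable X: the Kullback-Leibler divergence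
  (natural log) of the law of X from the Gaussian with the same mean and variance,
  i.e. the integral of f log (f/g).\<close>
definition dkl_cont :: "'a measure \<Rightarrow> ('a \<Rightarrow> real) \<Rightarrow> real" where
  "dkl_cont M X =
     KL_divergence (exp 1)
       (density lborel (normal_density (rv_mean M X) (sqrt (rv_var M X))))
       (distr M lborel X)"

end

theory Submission
  imports Defs "HOL-Library.Nat_Bijection"
begin

lemma disc_nn:
  fixes Y :: "'a \<Rightarrow> real" and xs :: "nat \<Rightarrow> real" and h :: "real \<Rightarrow> ennreal"
  assumes P: "prob_space M" and Ym: "Y \<in> borel_measurable M" and inj: "inj xs"
    and rng: "\<And>\<omega>. \<omega> \<in> space M \<Longrightarrow> Y \<omega> \<in> range xs"
  shows "(\<integral>\<^sup>+\<omega>. h (Y \<omega>) \<partial>M) = (\<Sum>m. h (xs m) * ennreal (pmass M Y (xs m)))"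
proof -
  interpret prob_space M by fact
  have meas: "{\<omega>\<in>space M. Y \<omega> = c} \<in> sets M" for c
    using Ym by measurable
  have "(\<integral>\<^sup>+\<omega>. h (Y \<omega>) \<partial>M) = (\<integral>\<^sup>+\<omega>. (\<Sum>m. h (xs m) * indicator {\<omega>\<in>space M. Y \<omega> = xs m} \<omega>) \<partial>M)"
  proof (rule nn_integral_cong)
    fix \<omega> assume \<omega>: "\<omega> \<in> space M"
    then obtain m0 where m0: "Y \<omega> = xs m0" using rng by blast
    have "(\<Sum>m. h (xs m) * indicator {\<omega>\<in>space M. Y \<omega> = xs m} \<omega>) = (\<Sum>m\<in>{m0}. h (xs m) * indicator {\<omega>\<in>space M. Y \<omega> = xs m} \<omega>)"
      by (rule suminf_finite) (use \<omega> m0 inj in \<open>auto simp: indicator_def inj_eq\<close>)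
    then show "h (Y \<omega>) = (\<Sum>m. h (xs m) * indicator {\<omega>\<in>space M. Y \<omega> = xs m} \<omega>)"
      using m0 \<omega> by simp
  qed
  also have "\<dots> = (\<Sum>m. \<integral>\<^sup>+\<omega>. h (xs m) * indicator {\<omega>\<in>space M. Y \<omega> = xs m} \<omega> \<partial>M)"
    by (subst nn_integral_suminf) (use meas in auto)
  also have "\<dots> = (\<Sum>m. h (xs m) * ennreal (pmass M Y (xs m)))"
    by (intro suminf_cong) (simp add: nn_integral_cmult_indicator meas pmass_def emeasure_eq_measure)
  finally show ?thesis .
qed

lemma disc_meas:
  fixes Y :: "'a \<Rightarrow> real" and xs :: "nat \<Rightarrow> real" and h :: "real \<Rightarrow> 'b::topological_space"
  assumes Ym: "Y \<in> borel_measurable M" and inj: "inj xs"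
    and rng: "\<And>\<omega>. \<omega> \<in> space M \<Longrightarrow> Y \<omega> \<in> range xs"
  shows "(\<lambda>\<omega>. h (Y \<omega>)) \<in> borel_measurable M"
proof -
  have K: "(\<lambda>\<omega>. inv xs (Y \<omega>)) \<in> measurable M (count_space UNIV)"
  proof (subst measurable_count_space_eq_countable, simp, safe)
    fix m
    have "(\<lambda>\<omega>. inv xs (Y \<omega>)) -` {m} \<inter> space M = {\<omega>\<in>space M. Y \<omega> = xs m}"
      using rng inj by (auto simp: inv_f_f f_inv_into_f)
    also have "\<dots> \<in> sets M" using Ym by measurable
    finally show "(\<lambda>\<omega>. inv xs (Y \<omega>)) -` {m} \<inter> space M \<in> sets M" .
  qed simp
  have "(\<lambda>\<omega>. h (xs (inv xs (Y \<omega>)))) \<in> borel_measurable M"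
    using measurable_compose[OF K, of "\<lambda>m. h (xs m)" borel] by simp
  then show ?thesis
    by (rule measurable_cong[THEN iffD1, rotated]) (use rng in \<open>auto simp: f_inv_into_f\<close>)
qed

lemma disc_int:
  fixes Y :: "'a \<Rightarrow> real" and xs :: "nat \<Rightarrow> real" and h :: "real \<Rightarrow> real"
  assumes P: "prob_space M" and Ym: "Y \<in> borel_measurable M" and inj: "inj xs"
    and rng: "\<And>\<omega>. \<omega> \<in> space M \<Longrightarrow> Y \<omega> \<in> range xs"
    and nn: "\<And>y. 0 \<le> h y"
  shows "integrable M (\<lambda>\<omega>. h (Y \<omega>)) \<longleftrightarrow> summable (\<lambda>m. h (xs m) * pmass M Y (xs m))"
    and "summable (\<lambda>m. h (xs m) * pmass M Y (xs m)) \<Longrightarrow>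
          (\<integral>\<omega>. h (Y \<omega>) \<partial>M) = (\<Sum>m. h (xs m) * pmass M Y (xs m))"
proof -
  interpret prob_space M by fact
  have pm: "0 \<le> pmass M Y y" for y by (simp add: pmass_def)
  have hm: "(\<lambda>\<omega>. h (Y \<omega>)) \<in> borel_measurable M"
    by (rule disc_meas[OF Ym inj rng])
  have nn2: "0 \<le> h (xs m) * pmass M Y (xs m)" for m using nn pm by simp
  have eq: "(\<integral>\<^sup>+\<omega>. ennreal (h (Y \<omega>)) \<partial>M) = (\<Sum>m. ennreal (h (xs m) * pmass M Y (xs m)))"
    using disc_nn[OF P Ym inj rng, of "\<lambda>y. ennreal (h y)"] by (simp only: ennreal_mult[OF nn pm])
  show 1: "integrable M (\<lambda>\<omega>. h (Y \<omega>)) \<longleftrightarrow> summable (\<lambda>m. h (xs m) * pmass M Y (xs m))"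
  proof
    assume i: "integrable M (\<lambda>\<omega>. h (Y \<omega>))"
    have "(\<integral>\<^sup>+\<omega>. ennreal (h (Y \<omega>)) \<partial>M) = ennreal (\<integral>\<omega>. h (Y \<omega>) \<partial>M)"
      by (rule nn_integral_eq_integral[OF i]) (simp add: nn)
    then have "(\<integral>\<^sup>+\<omega>. ennreal (h (Y \<omega>)) \<partial>M) \<noteq> top" by simp
    then show "summable (\<lambda>m. h (xs m) * pmass M Y (xs m))"
      unfolding eq by (rule summable_suminf_not_top[OF nn2])
  next
    assume s: "summable (\<lambda>m. h (xs m) * pmass M Y (xs m))"
    have "(\<integral>\<^sup>+\<omega>. ennreal (h (Y \<omega>)) \<partial>M) < \<infinity>"
      unfolding eq using ennreal_suminf_neq_top[OF s nn2] by (simp add: top.not_eq_extremum)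
    then show "integrable M (\<lambda>\<omega>. h (Y \<omega>))"
      by (intro integrableI_nonneg hm) (auto simp: nn)
  qed
  assume s: "summable (\<lambda>m. h (xs m) * pmass M Y (xs m))"
  have "(\<integral>\<omega>. h (Y \<omega>) \<partial>M) = enn2real (\<integral>\<^sup>+\<omega>. ennreal (h (Y \<omega>)) \<partial>M)"
    using hm nn by (intro integral_eq_nn_integral) auto
  also have "\<dots> = (\<Sum>m. h (xs m) * pmass M Y (xs m))"
    unfolding eq by (subst suminf_ennreal2[OF nn2 s]) (simp add: suminf_nonneg[OF s nn2])
  finally show "(\<integral>\<omega>. h (Y \<omega>) \<partial>M) = (\<Sum>m. h (xs m) * pmass M Y (xs m))" .
qed

lemma sq_bounds:
  fixes x t d :: real
  assumes "x \<le> t" "t \<le> x + d"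
  shows "x\<^sup>2 - 2 * \<bar>x\<bar> * d \<le> t\<^sup>2" "t\<^sup>2 \<le> x\<^sup>2 + 2 * \<bar>x\<bar> * d + d\<^sup>2"
proof -
  define s where "s = t - x"
  have s: "0 \<le> s" "s \<le> d" "t = x + s" using assms by (auto simp: s_def)
  have "- (\<bar>x\<bar> * s) \<le> x * s" using s mult_right_mono[of "-\<bar>x\<bar>" x s] by simp
  moreover have "\<bar>x\<bar> * s \<le> \<bar>x\<bar> * d" using s by (intro mult_left_mono) auto
  moreover have "x * s \<le> \<bar>x\<bar> * s" using s mult_right_mono[of x "\<bar>x\<bar>" s] by simp
  moreover have "s\<^sup>2 \<le> d\<^sup>2" using s by (intro power_mono) auto
  ultimately show "x\<^sup>2 - 2 * \<bar>x\<bar> * d \<le> t\<^sup>2" "t\<^sup>2 \<le> x\<^sup>2 + 2 * \<bar>x\<bar> * d + d\<^sup>2"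
    unfolding s(3) by (auto simp: power2_eq_square algebra_simps)
qed

lemma aux_lin:
  fixes A B C D E L :: real
  shows "A - (B + 2 * C + D)/2 - E \<le> L \<Longrightarrow> L \<le> A - (B - 2 * C)/2 - E \<Longrightarrow> 0 \<le> D \<Longrightarrow> \<bar>L - (A - E - B/2)\<bar> \<le> C + D/2"
  by (simp add: abs_le_iff field_simps)

lemma qint_bounds:
  fixes x d :: real
  assumes d: "d > 0"
  shows "d * (exp (-(x\<^sup>2 + 2 * \<bar>x\<bar> * d + d\<^sup>2)/2) / sqrt (2*pi)) \<le> (LBINT t=x..x+d. normal_density 0 1 t)"
    and "(LBINT t=x..x+d. normal_density 0 1 t) \<le> d * (exp (-(x\<^sup>2 - 2 * \<bar>x\<bar> * d)/2) / sqrt (2*pi))"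
proof -
  have cont: "continuous_on {x..x+d} (normal_density 0 1)"
    unfolding normal_density_def by (intro continuous_intros) auto
  have eq: "(LBINT t=x..x+d. normal_density 0 1 t) = integral {x..x+d} (normal_density 0 1)"
    using d by (intro interval_integral_eq_integral borel_integrable_atLeastAtMost' cont) auto
  have int: "normal_density 0 1 integrable_on {x..x+d}" by (rule integrable_continuous_interval[OF cont])
  have "integral {x..x+d} (\<lambda>_. exp (-(x\<^sup>2 + 2 * \<bar>x\<bar> * d + d\<^sup>2)/2) / sqrt (2*pi)) \<le> integral {x..x+d} (normal_density 0 1)"
  proof (rule integral_le[OF _ int])
    fix t assume t: "t \<in> {x..x+d}"
    show "exp (-(x\<^sup>2 + 2 * \<bar>x\<bar> * d + d\<^sup>2)/2) / sqrt (2*pi) \<le> normal_density 0 1 t"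
      using sq_bounds(2)[of x t d] t unfolding normal_density_def by (auto intro!: divide_right_mono)
  qed auto
  then show "d * (exp (-(x\<^sup>2 + 2 * \<bar>x\<bar> * d + d\<^sup>2)/2) / sqrt (2*pi)) \<le> (LBINT t=x..x+d. normal_density 0 1 t)"
    using d by (simp add: eq)
  have "integral {x..x+d} (normal_density 0 1) \<le> integral {x..x+d} (\<lambda>_. exp (-(x\<^sup>2 - 2 * \<bar>x\<bar> * d)/2) / sqrt (2*pi))"
  proof (rule integral_le[OF int])
    fix t assume t: "t \<in> {x..x+d}"
    show "normal_density 0 1 t \<le> exp (-(x\<^sup>2 - 2 * \<bar>x\<bar> * d)/2) / sqrt (2*pi)"
      using sq_bounds(1)[of x t d] t unfolding normal_density_def by (auto intro!: divide_right_mono)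
  qed auto
  then show "(LBINT t=x..x+d. normal_density 0 1 t) \<le> d * (exp (-(x\<^sup>2 - 2 * \<bar>x\<bar> * d)/2) / sqrt (2*pi))"
    using d by (simp add: eq)
qed

lemma lnq_bound:
  fixes x d :: real
  assumes d: "d > 0"
  shows "(LBINT t=x..x+d. normal_density 0 1 t) > 0"
    and "\<bar>ln (LBINT t=x..x+d. normal_density 0 1 t) - (ln d - ln (sqrt (2*pi)) - x\<^sup>2/2)\<bar> \<le> \<bar>x\<bar> * d + d\<^sup>2/2"
proof -
  let ?q = "LBINT t=x..x+d. normal_density 0 1 t"
  have lo: "d * (exp (-(x\<^sup>2 + 2 * \<bar>x\<bar> * d + d\<^sup>2)/2) / sqrt (2*pi)) \<le> ?q"
    and hi: "?q \<le> d * (exp (-(x\<^sup>2 - 2 * \<bar>x\<bar> * d)/2) / sqrt (2*pi))"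
    using qint_bounds[OF d] by auto
  have pos: "0 < d * (exp (-(x\<^sup>2 + 2 * \<bar>x\<bar> * d + d\<^sup>2)/2) / sqrt (2*pi))" using d by simp
  then show qpos: "?q > 0" using lo by linarith
  have "ln (d * (exp (-(x\<^sup>2 + 2 * \<bar>x\<bar> * d + d\<^sup>2)/2) / sqrt (2*pi))) \<le> ln ?q"
    using lo pos by simp
  moreover have "ln (d * (exp (-(x\<^sup>2 + 2 * \<bar>x\<bar> * d + d\<^sup>2)/2) / sqrt (2*pi))) = ln d - (x\<^sup>2 + 2 * \<bar>x\<bar> * d + d\<^sup>2)/2 - ln (sqrt (2*pi))"
    using d by (simp add: ln_mult ln_div field_simps)
  moreover have "ln ?q \<le> ln (d * (exp (-(x\<^sup>2 - 2 * \<bar>x\<bar> * d)/2) / sqrt (2*pi)))"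
    using hi qpos by simp
  moreover have "ln (d * (exp (-(x\<^sup>2 - 2 * \<bar>x\<bar> * d)/2) / sqrt (2*pi))) = ln d - (x\<^sup>2 - 2 * \<bar>x\<bar> * d)/2 - ln (sqrt (2*pi))"
    using d by (simp add: ln_mult ln_div field_simps)
  ultimately have "ln d - (x\<^sup>2 + 2 * (\<bar>x\<bar> * d) + d\<^sup>2)/2 - ln (sqrt (2*pi)) \<le> ln ?q"
     "ln ?q \<le> ln d - (x\<^sup>2 - 2 * (\<bar>x\<bar> * d))/2 - ln (sqrt (2*pi))" by (simp_all add: mult.assoc)
  moreover have "0 \<le> d\<^sup>2" by simp
  ultimately show "\<bar>ln ?q - (ln d - ln (sqrt (2*pi)) - x\<^sup>2/2)\<bar> \<le> \<bar>x\<bar> * d + d\<^sup>2/2"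
    by (rule aux_lin)
qed

lemma plnp_bound:
  fixes p t :: real
  assumes "0 \<le> p" "p \<le> 1" "0 \<le> t"
  shows "- (p * ln p) \<le> p * t + exp (-t)"
proof (cases "p = 0")
  case True then show ?thesis by simp
next
  case False
  then have p: "p > 0" using assms by simp
  have "ln (exp (-t) / p) \<le> exp (-t) / p - 1" by (rule ln_le_minus_one) (use p in simp)
  moreover have "ln (exp (-t) / p) = -t - ln p" using p by (simp add: ln_div)
  ultimately have "-t - ln p \<le> exp (-t) / p - 1" by simp
  then have "p * (-t - ln p) \<le> p * (exp (-t) / p - 1)" using p by (intro mult_left_mono) auto
  then have "- p * t - p * ln p \<le> exp (-t) - p" using p by (simp add: algebra_simps)
  then show ?thesis using p by simp
qed

lemma int_decode_abs: "real m / 2 - 1/2 \<le> \<bar>real_of_int (int_decode m)\<bar>"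
proof (cases "even m")
  case True
  then obtain k where "m = 2 * k" by auto
  then show ?thesis by (simp add: int_decode_def sum_decode_def)
next
  case False
  then obtain k where "m = 2 * k + 1" using oddE by blast
  then show ?thesis by (simp add: int_decode_def sum_decode_def field_simps)
qed

lemma summable_exp_dec: "summable (\<lambda>m. exp (- \<bar>real_of_int (int_decode m)\<bar>))"
proof (rule summable_comparison_test)
  show "summable (\<lambda>m::nat. exp (1/2) * exp (-1/2::real) ^ m)"
    by (intro summable_mult summable_geometric) simp
  show "\<exists>N. \<forall>n\<ge>N. norm (exp (- \<bar>real_of_int (int_decode n)\<bar>)) \<le> exp (1/2) * exp (-1/2::real) ^ n"
  proof (intro exI allI impI)
    fix n :: nat
    have "exp (- \<bar>real_of_int (int_decode n)\<bar>) \<le> exp (1/2 - real n / 2)"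
      using int_decode_abs[of n] by simp
    also have "\<dots> = exp (1/2) * exp (-1/2::real) ^ n"
      by (simp add: exp_diff exp_of_nat_mult[symmetric] exp_minus field_simps flip: exp_add)
    finally show "norm (exp (- \<bar>real_of_int (int_decode n)\<bar>)) \<le> exp (1/2) * exp (-1/2::real) ^ n" by simp
  qed
qed

lemma S_moments:
  fixes M :: "'a measure" and w :: "nat \<Rightarrow> 'a \<Rightarrow> real"
  assumes P: "prob_space M"
    and indep: "prob_space.indep_vars M (\<lambda>_. borel) w {1..}"
    and finvar: "\<forall>i\<ge>1. integrable M (\<lambda>\<omega>. (w i \<omega>)\<^sup>2)"
    and mean0: "\<forall>i\<ge>1. rv_mean M (w i) = 0"
  shows "(\<lambda>\<omega>. \<Sum>i=1..n. w i \<omega>) \<in> borel_measurable M"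
    and "integrable M (\<lambda>\<omega>. \<Sum>i=1..n. w i \<omega>)"
    and "integrable M (\<lambda>\<omega>. (\<Sum>i=1..n. w i \<omega>)\<^sup>2)"
    and "(\<integral>\<omega>. (\<Sum>i=1..n. w i \<omega>) \<partial>M) = 0"
    and "(\<integral>\<omega>. (\<Sum>i=1..n. w i \<omega>)\<^sup>2 \<partial>M) = (\<Sum>i=1..n. rv_var M (w i))"
proof -
  interpret prob_space M by fact
  have wm[measurable]: "w i \<in> borel_measurable M" if "i \<ge> 1" for i
    using indep that unfolding indep_vars_def by auto
  have wi: "integrable M (w i)" if "i \<ge> 1" for i
    using square_integrable_imp_integrable[OF wm[OF that]] finvar that by simp
  have wmean: "(\<integral>\<omega>. w i \<omega> \<partial>M) = 0" if "i \<ge> 1" for i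
    using mean0 that by (simp add: rv_mean_def)
  have wvar: "rv_var M (w i) = (\<integral>\<omega>. (w i \<omega>)\<^sup>2 \<partial>M)" if "i \<ge> 1" for i
    using mean0 that by (simp add: rv_var_def)
  have cross: "integrable M (\<lambda>\<omega>. w i \<omega> * w j \<omega>) \<and>
      (\<integral>\<omega>. w i \<omega> * w j \<omega> \<partial>M) = (if i = j then (\<integral>\<omega>. (w i \<omega>)\<^sup>2 \<partial>M) else 0)"
    if "i \<ge> 1" "j \<ge> 1" for i j
  proof (cases "i = j")
    case True then show ?thesis using finvar that by (simp add: power2_eq_square)
  next
    case False
    have ind2: "indep_vars (\<lambda>_. borel) w {i, j}"
      by (rule indep_vars_subset[OF indep]) (use that in auto)
    have "(\<integral>\<omega>. (\<Prod>k\<in>{i,j}. w k \<omega>) \<partial>M) = (\<Prod>k\<in>{i,j}. \<integral>\<omega>. w k \<omega> \<partial>M)"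
      by (rule indep_vars_lebesgue_integral[OF _ ind2]) (use wi that in auto)
    moreover have "integrable M (\<lambda>\<omega>. (\<Prod>k\<in>{i,j}. w k \<omega>))"
      by (rule indep_vars_integrable[OF _ ind2]) (use wi that in auto)
    ultimately show ?thesis using False wmean that by simp
  qed
  show "(\<lambda>\<omega>. \<Sum>i=1..n. w i \<omega>) \<in> borel_measurable M" by simp
  show "integrable M (\<lambda>\<omega>. \<Sum>i=1..n. w i \<omega>)" using wi by auto
  show "(\<integral>\<omega>. (\<Sum>i=1..n. w i \<omega>) \<partial>M) = 0"
    using wi wmean by (simp add: Bochner_Integration.integral_sum)
  have sq: "(\<Sum>i=1..n. w i \<omega>)\<^sup>2 = (\<Sum>i=1..n. \<Sum>j=1..n. w i \<omega> * w j \<omega>)" for \<omega>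
    by (simp add: power2_eq_square sum_product)
  show "integrable M (\<lambda>\<omega>. (\<Sum>i=1..n. w i \<omega>)\<^sup>2)"
    unfolding sq
    apply (rule Bochner_Integration.integrable_sum)
    apply (rule Bochner_Integration.integrable_sum)
    using cross by auto
  have "(\<integral>\<omega>. (\<Sum>i=1..n. w i \<omega>)\<^sup>2 \<partial>M) = (\<Sum>i=1..n. \<Sum>j=1..n. \<integral>\<omega>. w i \<omega> * w j \<omega> \<partial>M)"
    unfolding sq
  proof (subst Bochner_Integration.integral_sum)
    show "integrable M (\<lambda>\<omega>. \<Sum>j=1..n. w i \<omega> * w j \<omega>)" if "i \<in> {1..n}" for i
      by (rule Bochner_Integration.integrable_sum) (use cross that in auto)
    show "(\<Sum>i=1..n. \<integral>\<omega>. (\<Sum>j=1..n. w i \<omega> * w j \<omega>) \<partial>M) = (\<Sum>i=1..n. \<Sum>j=1..n. \<integral>\<omega>. w i \<omega> * w j \<omega> \<partial>M)"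
      by (intro sum.cong refl Bochner_Integration.integral_sum) (use cross in auto)
  qed
  also have "\<dots> = (\<Sum>i=1..n. \<Sum>j=1..n. (if i = j then (\<integral>\<omega>. (w i \<omega>)\<^sup>2 \<partial>M) else 0))"
    using cross by (intro sum.cong refl) auto
  also have "\<dots> = (\<Sum>i=1..n. rv_var M (w i))"
    using wvar by (simp add: sum.delta)
  finally show "(\<integral>\<omega>. (\<Sum>i=1..n. w i \<omega>)\<^sup>2 \<partial>M) = (\<Sum>i=1..n. rv_var M (w i))" .
qed

lemma S_lattice:
  fixes w :: "nat \<Rightarrow> 'a \<Rightarrow> real"
  assumes lattice: "\<forall>i\<ge>1. \<forall>\<omega>\<in>space M. w i \<omega> \<in> range (\<lambda>k::int. a + of_int k * l)"
    and "\<omega> \<in> space M"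
  shows "\<exists>k::int. (\<Sum>i=1..n. w i \<omega>) = real n * a + of_int k * l"
proof (induction n)
  case 0 then show ?case by (intro exI[of _ 0]) simp
next
  case (Suc n)
  then obtain k :: int where k: "(\<Sum>i=1..n. w i \<omega>) = real n * a + of_int k * l" by blast
  obtain j :: int where j: "w (Suc n) \<omega> = a + of_int j * l" using lattice assms(2) by fastforce
  have e: "(\<Sum>i=1..Suc n. w i \<omega>) = (\<Sum>i=1..n. w i \<omega>) + w (Suc n) \<omega>" by simp
  show ?case
    by (intro exI[of _ "k + j"]) (simp only: e k j, simp add: algebra_simps)
qed

lemma infsum_int_dec:
  fixes g :: "int \<Rightarrow> real"
  assumes "summable (\<lambda>m. \<bar>g (int_decode m)\<bar>)"
  shows "infsum g UNIV = (\<Sum>m. g (int_decode m))"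
proof -
  have "infsum (\<lambda>m. g (int_decode m)) UNIV = infsum g UNIV"
    by (rule infsum_reindex_bij_betw) (rule bij_int_decode)
  moreover have "((\<lambda>m. g (int_decode m)) has_sum (\<Sum>m. g (int_decode m))) UNIV"
    using assms by (intro norm_summable_imp_has_sum) (auto intro!: summable_sums dest: summable_rabs_cancel)
  ultimately show ?thesis using infsumI by metis
qed

lemma infsum_nat_suminf:
  fixes g :: "nat \<Rightarrow> real"
  assumes "summable (\<lambda>m. \<bar>g m\<bar>)"
  shows "infsum g UNIV = (\<Sum>m. g m)"
proof -
  have "(g has_sum (\<Sum>m. g m)) UNIV"
    using assms by (intro norm_summable_imp_has_sum) (auto intro!: summable_sums dest: summable_rabs_cancel)
  then show ?thesis using infsumI by metis
qed

lemma part1: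
  fixes M :: "'a measure" and Y :: "'a \<Rightarrow> real" and b d :: real
  assumes P: "prob_space M" and Ym: "Y \<in> borel_measurable M" and d: "d > 0"
    and rng: "\<And>\<omega>. \<omega> \<in> space M \<Longrightarrow> \<exists>k::int. Y \<omega> = b + of_int k * d"
    and int2: "integrable M (\<lambda>\<omega>. (Y \<omega>)\<^sup>2)"
    and m0: "rv_mean M Y = 0" and v1: "rv_var M Y = 1"
  defines "xs \<equiv> \<lambda>m. b + real_of_int (int_decode m) * d"
  defines "p \<equiv> \<lambda>m. pmass M Y (xs m)"
  shows "summable (\<lambda>m. - (p m * ln (p m)))"
    and "\<And>m. 0 \<le> - (p m * ln (p m))"
    and "\<exists>R. \<bar>R\<bar> \<le> d + d\<^sup>2/2 \<and>
           dkl_lattice M Y b d = (\<Sum>m. p m * ln (p m)) - ln d + ln (sqrt (2*pi)) + 1/2 + R"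
proof -
  interpret prob_space M by fact
  have inj: "inj xs"
    using d by (auto simp: xs_def inj_def int_decode_eq)
  have rng': "Y \<omega> \<in> range xs" if om: "\<omega> \<in> space M" for \<omega>
  proof -
    obtain k :: int where "Y \<omega> = b + of_int k * d" using rng[OF om] by blast
    then have "Y \<omega> = xs (int_encode k)" by (simp add: xs_def)
    then show ?thesis by blast
  qed
  have p0: "0 \<le> p m" for m by (simp add: p_def pmass_def)
  have p1: "p m \<le> 1" for m by (simp add: p_def pmass_def)
  note DI = disc_int[OF P Ym inj rng']
  have s1: "summable (\<lambda>m. 1 * p m)"
    using DI(1)[of "\<lambda>_. 1"] by (simp add: p_def)
  have sum1: "(\<Sum>m. p m) = 1"
    using DI(2)[of "\<lambda>_. 1"] s1 by (simp add: p_def prob_space)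
  have sp: "summable p" using s1 by simp
  have EY2: "(\<integral>\<omega>. (Y \<omega>)\<^sup>2 \<partial>M) = 1"
    using v1 m0 by (simp add: rv_var_def)
  have s2: "summable (\<lambda>m. (xs m)\<^sup>2 * p m)"
    using DI(1)[of "\<lambda>y. y\<^sup>2"] int2 by (simp add: p_def)
  have sum2: "(\<Sum>m. (xs m)\<^sup>2 * p m) = 1"
    using DI(2)[of "\<lambda>y. y\<^sup>2"] s2 EY2 by (simp add: p_def)
  have le_abs: "\<bar>xs m\<bar> * p m \<le> (1/2) * p m + (1/2) * ((xs m)\<^sup>2 * p m)" for m
  proof -
    have "\<bar>xs m\<bar> \<le> 1/2 + (xs m)\<^sup>2 / 2"
      using sum_squares_ge_zero[of "\<bar>xs m\<bar> - 1" 0] by (simp add: power2_eq_square algebra_simps abs_mult_self_eq)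
    then have "p m * \<bar>xs m\<bar> \<le> p m * (1/2 + (xs m)\<^sup>2 / 2)" by (rule mult_left_mono) (rule p0)
    then show ?thesis by (simp add: algebra_simps)
  qed
  have sc: "summable (\<lambda>m. (1/2) * p m + (1/2) * ((xs m)\<^sup>2 * p m))"
    by (intro summable_add summable_mult sp s2)
  have s3: "summable (\<lambda>m. \<bar>xs m\<bar> * p m)"
    by (rule summable_comparison_test[OF _ sc]) (use le_abs p0 in auto)
  have sum3: "(\<Sum>m. \<bar>xs m\<bar> * p m) \<le> 1"
  proof -
    have "(\<Sum>m. \<bar>xs m\<bar> * p m) \<le> (\<Sum>m. (1/2) * p m + (1/2) * ((xs m)\<^sup>2 * p m))"
      by (rule suminf_le[OF le_abs s3 sc])
    also have "\<dots> = 1"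
      by (subst suminf_add[OF summable_mult[OF sp] summable_mult[OF s2], symmetric])
         (simp add: suminf_divide[OF sp] suminf_divide[OF s2] sum1 sum2)
    finally show ?thesis .
  qed
  show nn: "0 \<le> - (p m * ln (p m))" for m
  proof (cases "p m = 0")
    case False
    then have "ln (p m) \<le> 0" using p0[of m] p1[of m] by simp
    then show ?thesis using p0[of m] by (simp add: mult_nonneg_nonpos)
  qed simp
  have dec_bound: "\<bar>real_of_int (int_decode m)\<bar> \<le> (\<bar>xs m\<bar> + \<bar>b\<bar>) / d" for m
  proof -
    have "real_of_int (int_decode m) = (xs m - b) / d" using d by (simp add: xs_def)
    then have "\<bar>real_of_int (int_decode m)\<bar> = \<bar>xs m - b\<bar> / d" using d by simp
    also have "\<dots> \<le> (\<bar>xs m\<bar> + \<bar>b\<bar>) / d" using d by (intro divide_right_mono) auto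
    finally show ?thesis .
  qed
  have ent_le: "- (p m * ln (p m)) \<le> (1/d) * (\<bar>xs m\<bar> * p m) + (\<bar>b\<bar>/d) * p m + exp (- \<bar>real_of_int (int_decode m)\<bar>)" for m
  proof -
    have "- (p m * ln (p m)) \<le> p m * \<bar>real_of_int (int_decode m)\<bar> + exp (- \<bar>real_of_int (int_decode m)\<bar>)"
      by (rule plnp_bound[OF p0 p1]) simp
    also have "p m * \<bar>real_of_int (int_decode m)\<bar> \<le> p m * ((\<bar>xs m\<bar> + \<bar>b\<bar>) / d)"
      by (rule mult_left_mono[OF dec_bound p0])
    also have "p m * ((\<bar>xs m\<bar> + \<bar>b\<bar>) / d) = (1/d) * (\<bar>xs m\<bar> * p m) + (\<bar>b\<bar>/d) * p m"
      by (simp add: field_simps add_divide_distrib)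
    finally show ?thesis by simp
  qed
  show sent: "summable (\<lambda>m. - (p m * ln (p m)))"
  proof (rule summable_comparison_test)
    show "summable (\<lambda>m. (1/d) * (\<bar>xs m\<bar> * p m) + (\<bar>b\<bar>/d) * p m + exp (- \<bar>real_of_int (int_decode m)\<bar>))"
      by (intro summable_add summable_mult s3 sp summable_exp_dec)
  qed (use ent_le nn in auto)
  have sent': "summable (\<lambda>m. p m * ln (p m))"
    using summable_minus[OF sent] by simp
  define q where "q m = (LBINT t = xs m .. xs m + d. normal_density 0 1 t)" for m
  have qpos: "q m > 0" for m unfolding q_def by (rule lnq_bound(1)[OF d])
  define E where "E m = ln (q m) - (ln d - ln (sqrt (2*pi)) - (xs m)\<^sup>2/2)" for m
  have Eb: "\<bar>E m\<bar> \<le> \<bar>xs m\<bar> * d + d\<^sup>2/2" for m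
    unfolding E_def q_def by (rule lnq_bound(2)[OF d])
  define c where "c = ln d - ln (sqrt (2*pi))"
  have lnq: "p m * ln (q m) = c * p m - (1/2) * ((xs m)\<^sup>2 * p m) + p m * E m" for m
    by (simp add: E_def c_def algebra_simps)
  have pEb: "\<bar>p m * E m\<bar> \<le> d * (\<bar>xs m\<bar> * p m) + (d\<^sup>2/2) * p m" for m
  proof -
    have "\<bar>p m * E m\<bar> = p m * \<bar>E m\<bar>" using p0[of m] by (simp add: abs_mult)
    also have "\<dots> \<le> p m * (\<bar>xs m\<bar> * d + d\<^sup>2/2)" by (rule mult_left_mono[OF Eb p0])
    finally show ?thesis by (simp add: algebra_simps)
  qed
  have sB: "summable (\<lambda>m. d * (\<bar>xs m\<bar> * p m) + (d\<^sup>2/2) * p m)"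
    by (intro summable_add summable_mult s3 sp)
  have sBv: "(\<Sum>m. d * (\<bar>xs m\<bar> * p m) + (d\<^sup>2/2) * p m) \<le> d + d\<^sup>2/2"
  proof -
    have "(\<Sum>m. d * (\<bar>xs m\<bar> * p m) + (d\<^sup>2/2) * p m) = d * (\<Sum>m. \<bar>xs m\<bar> * p m) + (d\<^sup>2/2) * (\<Sum>m. p m)"
      by (subst suminf_add[symmetric]) (intro summable_mult s3 sp, intro summable_mult s3 sp, simp only: suminf_mult[OF s3] suminf_mult[OF sp])
    also have "\<dots> \<le> d * 1 + (d\<^sup>2/2) * 1"
      using sum3 sum1 d by (intro add_mono mult_left_mono) auto
    finally show ?thesis by simp
  qed
  have spE_abs: "summable (\<lambda>m. \<bar>p m * E m\<bar>)"
    by (rule summable_comparison_test[OF _ sB]) (use pEb in auto)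
  have spE: "summable (\<lambda>m. p m * E m)" using spE_abs by (rule summable_rabs_cancel)
  have sumpE: "\<bar>\<Sum>m. p m * E m\<bar> \<le> d + d\<^sup>2/2"
  proof -
    have "\<bar>\<Sum>m. p m * E m\<bar> \<le> (\<Sum>m. \<bar>p m * E m\<bar>)" by (rule summable_rabs[OF spE_abs])
    also have "\<dots> \<le> (\<Sum>m. d * (\<bar>xs m\<bar> * p m) + (d\<^sup>2/2) * p m)"
      by (rule suminf_le[OF pEb spE_abs sB])
    finally show ?thesis using sBv by linarith
  qed
  have slnq: "summable (\<lambda>m. p m * ln (q m))"
    unfolding lnq by (intro summable_add summable_diff summable_mult sp s2 spE)
  have A1: "summable (\<lambda>m. c * p m)" by (intro summable_mult sp)
  have A2: "summable (\<lambda>m. 1/2 * ((xs m)\<^sup>2 * p m))" by (intro summable_mult s2)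
  have "(\<Sum>m. c * p m - 1/2 * ((xs m)\<^sup>2 * p m) + p m * E m) = (\<Sum>m. c * p m - 1/2 * ((xs m)\<^sup>2 * p m)) + (\<Sum>m. p m * E m)"
    by (rule suminf_add[symmetric]) (intro summable_diff A1 A2, rule spE)
  also have "(\<Sum>m. c * p m - 1/2 * ((xs m)\<^sup>2 * p m)) = (\<Sum>m. c * p m) - (\<Sum>m. 1/2 * ((xs m)\<^sup>2 * p m))"
    by (rule suminf_diff[symmetric, OF A1 A2])
  also have "(\<Sum>m. c * p m) = c" by (simp only: suminf_mult[OF sp] sum1 mult_1_right)
  also have "(\<Sum>m. 1/2 * ((xs m)\<^sup>2 * p m)) = 1/2" by (simp only: suminf_mult[OF s2] sum2 mult_1_right)
  finally have sumlnq: "(\<Sum>m. p m * ln (q m)) = c - 1/2 + (\<Sum>m. p m * E m)"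
    unfolding lnq .
  define g where "g k = pmass M Y (b + of_int k * d) *
        ln (pmass M Y (b + of_int k * d) /
            (LBINT x = b + of_int k * d .. b + (of_int k + 1) * d. normal_density 0 1 x))" for k :: int
  have dkl: "dkl_lattice M Y b d = infsum g UNIV"
    unfolding dkl_lattice_def g_def m0 v1 by simp
  have gdec: "g (int_decode m) = p m * ln (p m) - p m * ln (q m)" for m
  proof -
    have e1: "b + of_int (int_decode m) * d = xs m" by (simp add: xs_def)
    have e2: "b + (of_int (int_decode m) + 1) * d = xs m + d" by (simp add: xs_def algebra_simps)
    have "g (int_decode m) = p m * ln (p m / q m)"
      unfolding g_def e1 e2 by (simp add: p_def q_def)
    also have "\<dots> = p m * ln (p m) - p m * ln (q m)"
    proof (cases "p m = 0")
      case False
      then have "p m > 0" using p0[of m] by simp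
      then show ?thesis using qpos[of m] by (simp add: ln_div algebra_simps)
    qed simp
    finally show ?thesis .
  qed
  have sg: "summable (\<lambda>m. \<bar>g (int_decode m)\<bar>)"
    unfolding gdec
  proof (rule summable_comparison_test)
    show "summable (\<lambda>m. - (p m * ln (p m)) + (\<bar>c\<bar> * p m + 1/2 * ((xs m)\<^sup>2 * p m) + \<bar>p m * E m\<bar>))"
      by (intro summable_add sent summable_mult sp s2 spE_abs)
    have "\<bar>p m * ln (p m) - p m * ln (q m)\<bar> \<le> - (p m * ln (p m)) + (\<bar>c\<bar> * p m + 1/2 * ((xs m)\<^sup>2 * p m) + \<bar>p m * E m\<bar>)" for m
    proof -
      have "\<bar>p m * ln (q m)\<bar> \<le> \<bar>c * p m\<bar> + \<bar>1/2 * ((xs m)\<^sup>2 * p m)\<bar> + \<bar>p m * E m\<bar>"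
        unfolding lnq by linarith
      also have "\<bar>c * p m\<bar> = \<bar>c\<bar> * p m" using p0[of m] by (simp add: abs_mult)
      also have "\<bar>1/2 * ((xs m)\<^sup>2 * p m)\<bar> = 1/2 * ((xs m)\<^sup>2 * p m)" using p0[of m] by simp
      finally have "\<bar>p m * ln (q m)\<bar> \<le> \<bar>c\<bar> * p m + 1/2 * ((xs m)\<^sup>2 * p m) + \<bar>p m * E m\<bar>" .
      moreover have "\<bar>p m * ln (p m)\<bar> = - (p m * ln (p m))" using nn[of m] by simp
      ultimately show ?thesis by linarith
    qed
    then show "\<exists>N. \<forall>n\<ge>N. norm \<bar>p n * ln (p n) - p n * ln (q n)\<bar> \<le> - (p n * ln (p n)) + (\<bar>c\<bar> * p n + 1/2 * ((xs n)\<^sup>2 * p n) + \<bar>p n * E n\<bar>)"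
      by auto
  qed
  have "dkl_lattice M Y b d = (\<Sum>m. p m * ln (p m) - p m * ln (q m))"
    unfolding dkl infsum_int_dec[OF sg] gdec ..
  also have "\<dots> = (\<Sum>m. p m * ln (p m)) - (\<Sum>m. p m * ln (q m))"
    by (rule suminf_diff[OF sent' slnq, symmetric])
  finally have "dkl_lattice M Y b d = (\<Sum>m. p m * ln (p m)) - ln d + ln (sqrt (2*pi)) + 1/2 + (- (\<Sum>m. p m * E m))"
    unfolding sumlnq c_def by simp
  then show "\<exists>R. \<bar>R\<bar> \<le> d + d\<^sup>2/2 \<and>
           dkl_lattice M Y b d = (\<Sum>m. p m * ln (p m)) - ln d + ln (sqrt (2*pi)) + 1/2 + R"
    using sumpE by (intro exI[of _ "- (\<Sum>m. p m * E m)"]) simp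
qed

lemma unif_facts:
  fixes U :: "'a \<Rightarrow> real"
  assumes P: "prob_space M" and Um: "U \<in> borel_measurable M"
    and unif: "distr M lborel U = uniform_measure lborel {-1/2<..<1/2::real}"
  shows "AE \<omega> in M. \<bar>U \<omega>\<bar> < 1/2"
    and "integrable M U" and "integrable M (\<lambda>\<omega>. (U \<omega>)\<^sup>2)"
    and "(\<integral>\<omega>. U \<omega> \<partial>M) = 0" and "(\<integral>\<omega>. (U \<omega>)\<^sup>2 \<partial>M) = 1/12"
proof -
  interpret prob_space M by fact
  have Um': "U \<in> measurable M lborel" using Um by simp
  have "AE x in distr M lborel U. x \<in> {-1/2<..<1/2::real}"
    unfolding unif by (subst AE_uniform_measure) auto
  then show ae: "AE \<omega> in M. \<bar>U \<omega>\<bar> < 1/2"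
    by (rule AE_mp[OF AE_distrD[OF Um']]) auto
  show iU: "integrable M U"
    by (rule integrable_const_bound[where B="1/2"]) (use ae Um in auto)
  have ae2: "AE \<omega> in M. norm ((U \<omega>)\<^sup>2) \<le> 1"
    using ae by eventually_elim (auto simp: abs_square_le_1)
  show iU2: "integrable M (\<lambda>\<omega>. (U \<omega>)\<^sup>2)"
    by (rule integrable_const_bound[where B=1]) (use ae2 Um in auto)
  have D: "distributed M lborel U (\<lambda>x. indicator {-1/2 .. 1/2::real} x / measure lborel {-1/2 .. 1/2::real})"
    unfolding distributed_def
  proof (intro conjI)
    show "distr M lborel U = density lborel (\<lambda>x. indicator {-1/2 .. 1/2::real} x / measure lborel {-1/2 .. 1/2::real})"
      unfolding unif uniform_measure_def
    proof (rule density_cong)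
      have "AE x in lborel. x \<noteq> -1/2" "AE x in lborel. x \<noteq> (1/2::real)" by (rule AE_lborel_singleton)+
      then show "AE x in lborel. indicator {-1/2<..<1/2::real} x / emeasure lborel {-1/2<..<1/2::real} =
          ennreal (indicator {-1/2 .. 1/2::real} x / measure lborel {-1/2 .. 1/2::real})"
        by eventually_elim (auto simp: indicator_def)
    qed auto
  qed (use Um in auto)
  have EU: "expectation U = 0"
    using uniform_distributed_expectation[OF D] by simp
  show "(\<integral>\<omega>. U \<omega> \<partial>M) = 0" using EU .
  have "variance U = 1/12"
    using uniform_distributed_variance[OF D] by simp
  then show "(\<integral>\<omega>. (U \<omega>)\<^sup>2 \<partial>M) = 1/12" using EU by simp
qed

lemma Z_moments:
  fixes Y U :: "'a \<Rightarrow> real" and d :: real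
  assumes P: "prob_space M" and Ym: "Y \<in> borel_measurable M" and Um: "U \<in> borel_measurable M"
    and int2: "integrable M (\<lambda>\<omega>. (Y \<omega>)\<^sup>2)"
    and m0: "rv_mean M Y = 0" and v1: "rv_var M Y = 1"
    and indYU: "prob_space.indep_var M borel Y borel U"
    and unif: "distr M lborel U = uniform_measure lborel {-1/2<..<1/2::real}"
  shows "integrable M (\<lambda>\<omega>. (Y \<omega> + d * U \<omega>)\<^sup>2)"
    and "rv_mean M (\<lambda>\<omega>. Y \<omega> + d * U \<omega>) = 0"
    and "rv_var M (\<lambda>\<omega>. Y \<omega> + d * U \<omega>) = 1 + d\<^sup>2/12"
    and "(\<integral>\<omega>. (Y \<omega> + d * U \<omega>)\<^sup>2 \<partial>M) = 1 + d\<^sup>2/12"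
proof -
  interpret prob_space M by fact
  note UF = unif_facts[OF P Um unif]
  have iY: "integrable M Y" by (rule square_integrable_imp_integrable[OF Ym int2])
  have EY: "(\<integral>\<omega>. Y \<omega> \<partial>M) = 0" using m0 by (simp add: rv_mean_def)
  have EY2: "(\<integral>\<omega>. (Y \<omega>)\<^sup>2 \<partial>M) = 1" using v1 m0 by (simp add: rv_var_def)
  have iYU: "integrable M (\<lambda>\<omega>. Y \<omega> * U \<omega>)"
    by (rule indep_var_integrable[OF indYU iY UF(2)])
  have EYU: "(\<integral>\<omega>. Y \<omega> * U \<omega> \<partial>M) = 0"
    using indep_var_lebesgue_integral[OF indYU iY UF(2)] EY by simp
  have sq: "(Y \<omega> + d * U \<omega>)\<^sup>2 = (Y \<omega>)\<^sup>2 + (2 * d) * (Y \<omega> * U \<omega>) + d\<^sup>2 * (U \<omega>)\<^sup>2" for \<omega>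
    by (simp add: power2_eq_square algebra_simps)
  show iZ2: "integrable M (\<lambda>\<omega>. (Y \<omega> + d * U \<omega>)\<^sup>2)"
    unfolding sq using int2 iYU UF(3) by auto
  have EZ: "(\<integral>\<omega>. Y \<omega> + d * U \<omega> \<partial>M) = 0"
    using iY UF(2) EY UF(4) by simp
  show m: "rv_mean M (\<lambda>\<omega>. Y \<omega> + d * U \<omega>) = 0" using EZ by (simp add: rv_mean_def)
  show E2: "(\<integral>\<omega>. (Y \<omega> + d * U \<omega>)\<^sup>2 \<partial>M) = 1 + d\<^sup>2/12"
    unfolding sq using int2 iYU UF(3) EY2 EYU UF(5) by simp
  show "rv_var M (\<lambda>\<omega>. Y \<omega> + d * U \<omega>) = 1 + d\<^sup>2/12"
    using E2 m by (simp add: rv_var_def)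
qed

lemma LHS_comp:
  fixes Y U :: "'a \<Rightarrow> real" and d :: real and xs :: "nat \<Rightarrow> real"
  assumes P: "prob_space M" and Ym: "Y \<in> borel_measurable M" and Um: "U \<in> borel_measurable M"
    and indYU: "prob_space.indep_var M borel Y borel U"
    and unif: "distr M lborel U = uniform_measure lborel {-1/2<..<1/2::real}"
    and inj: "inj xs" and rng: "\<And>\<omega>. \<omega> \<in> space M \<Longrightarrow> Y \<omega> \<in> range xs"
    and A: "A \<in> sets borel"
  shows "emeasure (distr M lborel (\<lambda>\<omega>. Y \<omega> + d * U \<omega>)) A =
     (\<Sum>m. (\<integral>\<^sup>+u. indicator A (xs m + d * u) * indicator {-1/2<..<1/2::real} u \<partial>lborel) * ennreal (pmass M Y (xs m)))"
proof -
  interpret prob_space M by fact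
  interpret PU: prob_space "distr M borel U" by (rule prob_space_distr) (use Um in simp)
  have [measurable]: "A \<in> sets borel" by (rule A)
  define F :: "real \<times> real \<Rightarrow> ennreal" where "F z = indicator A (fst z + d * snd z)" for z
  have Fm[measurable]: "(F :: real \<times> real \<Rightarrow> ennreal) \<in> borel_measurable (borel \<Otimes>\<^sub>M borel)"
    unfolding F_def by measurable
  have Fm2: "F \<in> borel_measurable (borel \<Otimes>\<^sub>M distr M borel U)"
    unfolding F_def by measurable
  have "emeasure (distr M lborel (\<lambda>\<omega>. Y \<omega> + d * U \<omega>)) A = (\<integral>\<^sup>+x. indicator A x \<partial>distr M lborel (\<lambda>\<omega>. Y \<omega> + d * U \<omega>))"
    by simp
  also have "\<dots> = (\<integral>\<^sup>+\<omega>. F (Y \<omega>, U \<omega>) \<partial>M)"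
    by (subst nn_integral_distr) (use Ym Um in \<open>auto simp: F_def\<close>)
  also have "\<dots> = (\<integral>\<^sup>+z. F z \<partial>distr M (borel \<Otimes>\<^sub>M borel) (\<lambda>\<omega>. (Y \<omega>, U \<omega>)))"
    by (subst nn_integral_distr) (use Ym Um in auto)
  also have "distr M (borel \<Otimes>\<^sub>M borel) (\<lambda>\<omega>. (Y \<omega>, U \<omega>)) = distr M borel Y \<Otimes>\<^sub>M distr M borel U"
    using indYU by (simp add: indep_var_distribution_eq)
  also have "(\<integral>\<^sup>+z. F z \<partial>(distr M borel Y \<Otimes>\<^sub>M distr M borel U)) =
      (\<integral>\<^sup>+y. (\<integral>\<^sup>+u. F (y, u) \<partial>distr M borel U) \<partial>distr M borel Y)"
    by (rule PU.nn_integral_fst[symmetric]) simp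
  also have "\<dots> = (\<integral>\<^sup>+\<omega>. (\<integral>\<^sup>+u. F (Y \<omega>, u) \<partial>distr M borel U) \<partial>M)"
    by (subst nn_integral_distr) (use Ym PU.borel_measurable_nn_integral_fst[OF Fm2] in auto)
  also have "\<dots> = (\<Sum>m. (\<integral>\<^sup>+u. F (xs m, u) \<partial>distr M borel U) * ennreal (pmass M Y (xs m)))"
    by (rule disc_nn[OF P Ym inj rng])
  also have "distr M borel U = uniform_measure lborel {-1/2<..<1/2::real}"
    unfolding unif[symmetric] by (rule distr_cong) auto
  also have "(\<lambda>m. (\<integral>\<^sup>+u. F (xs m, u) \<partial>uniform_measure lborel {-1/2<..<1/2::real}) * ennreal (pmass M Y (xs m))) =
     (\<lambda>m. (\<integral>\<^sup>+u. indicator A (xs m + d * u) * indicator {-1/2<..<1/2::real} u \<partial>lborel) * ennreal (pmass M Y (xs m)))"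
    by (rule ext, subst nn_integral_uniform_measure) (auto simp: F_def divide_ennreal_def)
  finally show ?thesis .
qed

lemma floor_shift: 
  fixes u :: real and k :: int
  shows "(\<lfloor>real_of_int k + u + 1/2\<rfloor> = k) \<longleftrightarrow> u \<in> {-1/2..<1/2}"
proof -
  have "\<lfloor>real_of_int k + u + 1/2\<rfloor> = k + \<lfloor>u + 1/2\<rfloor>"
    using floor_add_int[of "u + 1/2" k] by (simp add: add.assoc add.commute add.left_commute)
  moreover have "\<lfloor>u + 1/2\<rfloor> = 0 \<longleftrightarrow> u \<in> {-1/2..<1/2}"
    by (auto simp: floor_eq_iff)
  ultimately show ?thesis by simp
qed

lemma RHS_comp:
  fixes pz :: "int \<Rightarrow> real" and b d :: real
  assumes d: "d > 0" and pz: "\<And>k. 0 \<le> pz k" and A: "A \<in> sets borel"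
  defines "fZ \<equiv> \<lambda>t. pz \<lfloor>(t - b) / d + 1/2\<rfloor> / d"
  shows "emeasure (density lborel (\<lambda>t. ennreal (fZ t))) A =
     (\<Sum>m. (\<integral>\<^sup>+u. indicator A (b + real_of_int (int_decode m) * d + d * u) * indicator {-1/2<..<1/2::real} u \<partial>lborel)
            * ennreal (pz (int_decode m)))"
    and "fZ \<in> borel_measurable borel"
proof -
  have [measurable]: "A \<in> sets borel" by (rule A)
  define J where "J k = {t::real. \<lfloor>(t - b) / d + 1/2\<rfloor> = k}" for k
  have Jm[measurable]: "J k \<in> sets borel" for k
  proof -
    have "(\<lambda>t::real. \<lfloor>(t - b) / d + 1/2\<rfloor>) \<in> measurable borel (count_space UNIV)" by measurable
    then have "(\<lambda>t::real. \<lfloor>(t - b) / d + 1/2\<rfloor>) -` {k} \<inter> space borel \<in> sets borel"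
      by (rule measurable_sets) simp
    then show ?thesis by (simp add: J_def vimage_def)
  qed
  have fm: "fZ \<in> borel_measurable borel"
  proof -
    have "(\<lambda>t::real. \<lfloor>(t - b) / d + 1/2\<rfloor>) \<in> measurable borel (count_space UNIV)" by measurable
    then have "(\<lambda>t. pz \<lfloor>(t - b) / d + 1/2\<rfloor> / d) \<in> borel_measurable borel"
      by (rule measurable_compose) simp
    then show ?thesis by (simp add: fZ_def)
  qed
  then show "fZ \<in> borel_measurable borel" .
  have "emeasure (density lborel (\<lambda>t. ennreal (fZ t))) A = (\<integral>\<^sup>+t. ennreal (fZ t) * indicator A t \<partial>lborel)"
    by (rule emeasure_density) (use fm in auto)
  also have "\<dots> = (\<integral>\<^sup>+t. (\<Sum>m. ennreal (pz (int_decode m) / d) * (indicator A t * indicator (J (int_decode m)) t)) \<partial>lborel)"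
  proof (rule nn_integral_cong)
    fix t :: real
    define k0 where "k0 = \<lfloor>(t - b) / d + 1/2\<rfloor>"
    have "(\<Sum>m. ennreal (pz (int_decode m) / d) * (indicator A t * indicator (J (int_decode m)) t)) =
        (\<Sum>m\<in>{int_encode k0}. ennreal (pz (int_decode m) / d) * (indicator A t * indicator (J (int_decode m)) t))"
    proof (rule suminf_finite)
      fix m assume "m \<notin> {int_encode k0}"
      then have "int_decode m \<noteq> k0" by auto
      then show "ennreal (pz (int_decode m) / d) * (indicator A t * indicator (J (int_decode m)) t) = 0"
        by (simp add: J_def k0_def indicator_def)
    qed simp
    also have "\<dots> = ennreal (fZ t) * indicator A t"
      by (simp add: J_def k0_def fZ_def indicator_def)
    finally show "ennreal (fZ t) * indicator A t = (\<Sum>m. ennreal (pz (int_decode m) / d) * (indicator A t * indicator (J (int_decode m)) t))" ..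
  qed
  also have "\<dots> = (\<Sum>m. \<integral>\<^sup>+t. ennreal (pz (int_decode m) / d) * (indicator A t * indicator (J (int_decode m)) t) \<partial>lborel)"
    by (rule nn_integral_suminf) measurable
  also have "\<dots> = (\<Sum>m. (\<integral>\<^sup>+u. indicator A (b + real_of_int (int_decode m) * d + d * u) * indicator {-1/2<..<1/2::real} u \<partial>lborel)
            * ennreal (pz (int_decode m)))"
  proof (rule suminf_cong)
    fix m
    define k where "k = int_decode m"
    define x where "x = b + real_of_int k * d"
    have "(\<integral>\<^sup>+t. ennreal (pz k / d) * (indicator A t * indicator (J k) t) \<partial>lborel) =
        ennreal (pz k / d) * (\<integral>\<^sup>+t. indicator A t * indicator (J k) t \<partial>lborel)"
      by (rule nn_integral_cmult) measurable
    also have "(\<integral>\<^sup>+t. indicator A t * indicator (J k) t \<partial>lborel) =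
        ennreal \<bar>d\<bar> * (\<integral>\<^sup>+u. indicator A (x + d * u) * indicator (J k) (x + d * u) \<partial>lborel)"
      by (rule nn_integral_real_affine) (use d in auto)
    also have "(\<integral>\<^sup>+u. indicator A (x + d * u) * indicator (J k) (x + d * u) \<partial>lborel) =
        (\<integral>\<^sup>+u. indicator A (x + d * u) * indicator {-1/2<..<1/2::real} u \<partial>lborel)"
    proof (rule nn_integral_cong_AE)
      have "AE u in lborel. u \<noteq> (-1/2::real)" by (rule AE_lborel_singleton)
      then show "AE u in lborel. indicator A (x + d * u) * indicator (J k) (x + d * u) =
          (indicator A (x + d * u) * indicator {-1/2<..<1/2::real} u :: ennreal)"
      proof eventually_elim
        case (elim u)
        have "(x + d * u - b) / d + 1/2 = real_of_int k + u + 1/2"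
          using d by (simp add: x_def field_simps)
        then have "(x + d * u \<in> J k) \<longleftrightarrow> u \<in> {-1/2..<1/2}"
          using floor_shift[of k u] by (simp add: J_def)
        then show ?case using elim by (auto simp: indicator_def)
      qed
    qed
    finally have "(\<integral>\<^sup>+t. ennreal (pz k / d) * (indicator A t * indicator (J k) t) \<partial>lborel) =
        ennreal (pz k / d) * (ennreal d * (\<integral>\<^sup>+u. indicator A (x + d * u) * indicator {-1/2<..<1/2::real} u \<partial>lborel))"
      using d by simp
    also have "\<dots> = (\<integral>\<^sup>+u. indicator A (x + d * u) * indicator {-1/2<..<1/2::real} u \<partial>lborel) * ennreal (pz k)"
    proof -
      have "ennreal (pz k / d) * ennreal d = ennreal (pz k)"
        using d pz[of k] by (simp add: ennreal_mult[symmetric])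
      then show ?thesis by (simp only: mult.assoc[symmetric]) (rule mult.commute)
    qed
    finally show "(\<integral>\<^sup>+t. ennreal (pz (int_decode m) / d) * (indicator A t * indicator (J (int_decode m)) t) \<partial>lborel) =
        (\<integral>\<^sup>+u. indicator A (b + real_of_int (int_decode m) * d + d * u) * indicator {-1/2<..<1/2::real} u \<partial>lborel)
            * ennreal (pz (int_decode m))"
      by (simp add: k_def x_def)
  qed
  finally show "emeasure (density lborel (\<lambda>t. ennreal (fZ t))) A =
     (\<Sum>m. (\<integral>\<^sup>+u. indicator A (b + real_of_int (int_decode m) * d + d * u) * indicator {-1/2<..<1/2::real} u \<partial>lborel)
            * ennreal (pz (int_decode m)))" .
qed

lemma Z_density:
  fixes Y U :: "'a \<Rightarrow> real" and b d :: real
  assumes P: "prob_space M" and Ym: "Y \<in> borel_measurable M" and Um: "U \<in> borel_measurable M" and d: "d > 0"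
    and rng: "\<And>\<omega>. \<omega> \<in> space M \<Longrightarrow> \<exists>k::int. Y \<omega> = b + of_int k * d"
    and indYU: "prob_space.indep_var M borel Y borel U"
    and unif: "distr M lborel U = uniform_measure lborel {-1/2<..<1/2::real}"
  defines "fZ \<equiv> \<lambda>t. pmass M Y (b + of_int \<lfloor>(t - b) / d + 1/2\<rfloor> * d) / d"
  shows "distr M lborel (\<lambda>\<omega>. Y \<omega> + d * U \<omega>) = density lborel (\<lambda>t. ennreal (fZ t))"
    and "fZ \<in> borel_measurable borel"
proof -
  define xs where "xs = (\<lambda>m. b + real_of_int (int_decode m) * d)"
  have inj: "inj xs"
    using d by (auto simp: xs_def inj_def int_decode_eq)
  have rng': "Y \<omega> \<in> range xs" if om: "\<omega> \<in> space M" for \<omega>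
  proof -
    obtain k :: int where "Y \<omega> = b + of_int k * d" using rng[OF om] by blast
    then have "Y \<omega> = xs (int_encode k)" by (simp add: xs_def)
    then show ?thesis by blast
  qed
  define pz where "pz k = pmass M Y (b + of_int k * d)" for k :: int
  have pz0: "0 \<le> pz k" for k by (simp add: pz_def pmass_def)
  have fZ: "fZ = (\<lambda>t. pz \<lfloor>(t - b) / d + 1/2\<rfloor> / d)" by (simp add: fZ_def pz_def)
  show "fZ \<in> borel_measurable borel" unfolding fZ by (rule RHS_comp(2)[OF d pz0, of UNIV]) simp
  show "distr M lborel (\<lambda>\<omega>. Y \<omega> + d * U \<omega>) = density lborel (\<lambda>t. ennreal (fZ t))"
  proof (rule measure_eqI)
    show "sets (distr M lborel (\<lambda>\<omega>. Y \<omega> + d * U \<omega>)) = sets (density lborel (\<lambda>t. ennreal (fZ t)))" by simp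
    fix A assume "A \<in> sets (distr M lborel (\<lambda>\<omega>. Y \<omega> + d * U \<omega>))"
    then have A: "A \<in> sets borel" by simp
    show "emeasure (distr M lborel (\<lambda>\<omega>. Y \<omega> + d * U \<omega>)) A = emeasure (density lborel (\<lambda>t. ennreal (fZ t))) A"
    proof -
      have L: "emeasure (distr M lborel (\<lambda>\<omega>. Y \<omega> + d * U \<omega>)) A =
        (\<Sum>m. (\<integral>\<^sup>+u. indicator A (xs m + d * u) * indicator {-1/2<..<1/2::real} u \<partial>lborel) * ennreal (pmass M Y (xs m)))"
        by (rule LHS_comp[OF P Ym Um indYU unif inj rng' A])
      have R: "emeasure (density lborel (\<lambda>t. ennreal (pz \<lfloor>(t - b) / d + 1/2\<rfloor> / d))) A =
        (\<Sum>m. (\<integral>\<^sup>+u. indicator A (b + real_of_int (int_decode m) * d + d * u) * indicator {-1/2<..<1/2::real} u \<partial>lborel)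
            * ennreal (pz (int_decode m)))"
        by (rule RHS_comp(1)[OF d pz0 A])
      show ?thesis unfolding L fZ R by (simp add: xs_def pz_def)
    qed
  qed
qed

lemma part2:
  fixes M :: "'a measure" and Y U :: "'a \<Rightarrow> real" and b d :: real
  assumes P: "prob_space M" and Ym: "Y \<in> borel_measurable M" and d: "d > 0"
    and rng: "\<And>\<omega>. \<omega> \<in> space M \<Longrightarrow> \<exists>k::int. Y \<omega> = b + of_int k * d"
    and int2: "integrable M (\<lambda>\<omega>. (Y \<omega>)\<^sup>2)"
    and m0: "rv_mean M Y = 0" and v1: "rv_var M Y = 1"
    and Um: "U \<in> borel_measurable M"
    and indYU: "prob_space.indep_var M borel Y borel U"
    and unif: "distr M lborel U = uniform_measure lborel {-1/2<..<1/2::real}"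
  defines "xs \<equiv> \<lambda>m. b + real_of_int (int_decode m) * d"
  defines "p \<equiv> \<lambda>m. pmass M Y (xs m)"
  shows "dkl_cont M (\<lambda>\<omega>. Y \<omega> + d * U \<omega>) =
           (\<Sum>m. p m * ln (p m)) - ln d + ln (sqrt (2 * pi * (1 + d\<^sup>2/12))) + 1/2"
proof -
  interpret prob_space M by fact
  define v where "v = 1 + d\<^sup>2/12"
  have v: "v > 0" by (simp add: v_def add_pos_nonneg)
  define Z where "Z = (\<lambda>\<omega>. Y \<omega> + d * U \<omega>)"
  have Zm[measurable]: "Z \<in> borel_measurable M" unfolding Z_def using Ym Um by measurable
  note ZM = Z_moments[OF P Ym Um int2 m0 v1 indYU unif, of d, folded Z_def v_def]
  note UF = unif_facts[OF P Um unif]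
  define fZ where "fZ = (\<lambda>t. pmass M Y (b + of_int \<lfloor>(t - b) / d + 1/2\<rfloor> * d) / d)"
  note ZD = Z_density[OF P Ym Um d rng indYU unif, folded fZ_def Z_def]
  have ZD1: "distr M lborel Z = density lborel (\<lambda>t. ennreal (fZ t))"
    using ZD(1) by (simp add: Z_def fZ_def)
  have fZm[measurable]: "fZ \<in> borel_measurable borel" by (rule ZD(2))
  have fZ0: "0 \<le> fZ t" for t using d by (simp add: fZ_def pmass_def)
  define G where "G = normal_density 0 (sqrt v)"
  have Gpos: "0 < G t" for t using v by (simp add: G_def normal_density_pos)
  have Gm[measurable]: "G \<in> borel_measurable borel" by (simp add: G_def)
  have lnG: "ln (G z) = - ln (sqrt (2 * pi * v)) - z\<^sup>2 / (2 * v)" for z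
    using v by (simp add: G_def normal_density_def ln_mult ln_div)
  have "dkl_cont M Z = KL_divergence (exp 1) (density lborel G) (density lborel fZ)"
    unfolding dkl_cont_def ZM(2) ZM(3) G_def using ZD1 by simp
  also have "\<dots> = (\<integral>t. fZ t * log (exp 1) (fZ t / G t) \<partial>lborel)"
    by (rule lborel.KL_density_density) (use fZ0 Gpos in \<open>auto simp: less_le\<close>)
  also have "\<dots> = (\<integral>t. fZ t *\<^sub>R ln (fZ t / G t) \<partial>lborel)"
    by (simp add: log_def)
  also have "\<dots> = (\<integral>t. ln (fZ t / G t) \<partial>density lborel fZ)"
    by (rule integral_density[symmetric]) (auto simp: fZ0)
  also have "\<dots> = (\<integral>\<omega>. ln (fZ (Z \<omega>) / G (Z \<omega>)) \<partial>M)"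
    unfolding ZD1[symmetric] by (rule integral_distr) auto
  finally have KL: "dkl_cont M Z = (\<integral>\<omega>. ln (fZ (Z \<omega>) / G (Z \<omega>)) \<partial>M)" .
  have inj: "inj xs"
    using d by (auto simp: xs_def inj_def int_decode_eq)
  have rng': "Y \<omega> \<in> range xs" if om: "\<omega> \<in> space M" for \<omega>
  proof -
    obtain k :: int where "Y \<omega> = b + of_int k * d" using rng[OF om] by blast
    then have "Y \<omega> = xs (int_encode k)" by (simp add: xs_def)
    then show ?thesis by blast
  qed
  have sent: "summable (\<lambda>m. - (p m * ln (p m)))"
    using part1(1)[OF P Ym d rng int2 m0 v1] by (simp add: p_def xs_def)
  have pm1: "pmass M Y y \<le> 1" for y by (simp add: pmass_def)
  have pm0: "0 \<le> pmass M Y y" for y by (simp add: pmass_def)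
  define h :: "real \<Rightarrow> ennreal" where "h y = (if pmass M Y y = 0 then 1 else 0)" for y
  have "(\<integral>\<^sup>+\<omega>. h (Y \<omega>) \<partial>M) = (\<Sum>m. h (xs m) * ennreal (pmass M Y (xs m)))"
    by (rule disc_nn[OF P Ym inj rng'])
  also have "(\<lambda>m. h (xs m) * ennreal (pmass M Y (xs m))) = (\<lambda>_. 0)"
    by (auto simp: h_def fun_eq_iff)
  also have "(\<Sum>m. (0::ennreal)) = 0" by simp
  finally have "AE \<omega> in M. h (Y \<omega>) = 0"
    by (subst nn_integral_0_iff_AE[symmetric]) (auto intro: disc_meas[OF Ym inj rng'])
  then have pmpos: "AE \<omega> in M. pmass M Y (Y \<omega>) > 0"
    by eventually_elim (use pm0 in \<open>auto simp: h_def less_le split: if_splits\<close>)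
  have aeq: "AE \<omega> in M. ln (fZ (Z \<omega>) / G (Z \<omega>)) =
      - (- ln (pmass M Y (Y \<omega>))) + (ln (sqrt (2 * pi * v)) - ln d) + (Z \<omega>)\<^sup>2 / (2 * v)"
    using UF(1) pmpos AE_space
  proof eventually_elim
    case (elim \<omega>)
    obtain k :: int where k: "Y \<omega> = b + of_int k * d" using rng[OF elim(3)] by blast
    have eqk: "(Z \<omega> - b) / d + 1/2 = real_of_int k + U \<omega> + 1/2"
      using d by (simp add: Z_def k field_simps)
    have "\<lfloor>(Z \<omega> - b) / d + 1/2\<rfloor> = k"
    proof -
      have "-1/2 < U \<omega> \<and> U \<omega> < 1/2" using elim(1) unfolding abs_less_iff by linarith
      then have "U \<omega> \<in> {-1/2..<1/2}" by simp
      then show ?thesis using floor_shift[of k "U \<omega>"] by (simp only: eqk)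
    qed
    then have fz: "fZ (Z \<omega>) = pmass M Y (Y \<omega>) / d"
      by (simp add: fZ_def k)
    have "ln (fZ (Z \<omega>) / G (Z \<omega>)) = ln (pmass M Y (Y \<omega>)) - ln d - ln (G (Z \<omega>))"
      unfolding fz using elim(2) d Gpos[of "Z \<omega>"] by (simp add: ln_div ln_mult)
    then show ?case unfolding lnG by simp
  qed
  have iL: "integrable M (\<lambda>\<omega>. - ln (pmass M Y (Y \<omega>)))"
    and EL: "(\<integral>\<omega>. - ln (pmass M Y (Y \<omega>)) \<partial>M) = (\<Sum>m. - ln (pmass M Y (xs m)) * pmass M Y (xs m))"
  proof -
    have hnn: "0 \<le> - ln (pmass M Y y)" for y
    proof (cases "pmass M Y y = 0")
      case False then show ?thesis using pm0[of y] pm1[of y] by simp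
    qed simp
    have sm: "summable (\<lambda>m. - ln (pmass M Y (xs m)) * pmass M Y (xs m))"
      using sent by (simp add: p_def mult.commute)
    show "integrable M (\<lambda>\<omega>. - ln (pmass M Y (Y \<omega>)))"
      using disc_int(1)[OF P Ym inj rng', of "\<lambda>y. - ln (pmass M Y y)"] hnn sm by simp
    show "(\<integral>\<omega>. - ln (pmass M Y (Y \<omega>)) \<partial>M) = (\<Sum>m. - ln (pmass M Y (xs m)) * pmass M Y (xs m))"
      using disc_int(2)[OF P Ym inj rng', of "\<lambda>y. - ln (pmass M Y y)"] hnn sm by simp
  qed
  have EL': "(\<integral>\<omega>. - ln (pmass M Y (Y \<omega>)) \<partial>M) = - (\<Sum>m. p m * ln (p m))"
    unfolding EL using suminf_minus[OF summable_minus[OF sent, simplified]]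
    by (simp add: p_def mult.commute)
  have "(\<integral>\<omega>. ln (fZ (Z \<omega>) / G (Z \<omega>)) \<partial>M) =
      (\<integral>\<omega>. - (- ln (pmass M Y (Y \<omega>))) + (ln (sqrt (2 * pi * v)) - ln d) + (Z \<omega>)\<^sup>2 / (2 * v) \<partial>M)"
  proof (rule integral_cong_AE[OF _ _ aeq])
    show "(\<lambda>\<omega>. ln (fZ (Z \<omega>) / G (Z \<omega>))) \<in> borel_measurable M" by measurable
    show "(\<lambda>\<omega>. - (- ln (pmass M Y (Y \<omega>))) + (ln (sqrt (2 * pi * v)) - ln d) + (Z \<omega>)\<^sup>2 / (2 * v)) \<in> borel_measurable M"
      using iL by measurable
  qed
  also have "\<dots> = - (\<integral>\<omega>. - ln (pmass M Y (Y \<omega>)) \<partial>M) + (ln (sqrt (2 * pi * v)) - ln d) + (\<integral>\<omega>. (Z \<omega>)\<^sup>2 \<partial>M) / (2 * v)"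
    using iL ZM(1) by (simp add: Z_def prob_space)
  also have "\<dots> = (\<Sum>m. p m * ln (p m)) - ln d + ln (sqrt (2 * pi * v)) + 1/2"
    unfolding EL' using ZM(4) v by (simp add: Z_def)
  finally show ?thesis using KL by (simp add: Z_def v_def)
qed

lemma entropy_reindex:
  fixes M :: "'a measure" and X :: "'a \<Rightarrow> real" and xs :: "nat \<Rightarrow> real" and c :: real
  assumes c: "c > 0" and inj: "inj xs"
    and rng: "\<And>\<omega>. \<omega> \<in> space M \<Longrightarrow> X \<omega> / c \<in> range xs"
    and sm: "summable (\<lambda>m. - (pmass M (\<lambda>\<omega>. X \<omega> / c) (xs m) * ln (pmass M (\<lambda>\<omega>. X \<omega> / c) (xs m))))"
    and nn: "\<And>m. 0 \<le> - (pmass M (\<lambda>\<omega>. X \<omega> / c) (xs m) * ln (pmass M (\<lambda>\<omega>. X \<omega> / c) (xs m)))"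
  shows "disc_entropy M X = (\<Sum>m. - (pmass M (\<lambda>\<omega>. X \<omega> / c) (xs m) * ln (pmass M (\<lambda>\<omega>. X \<omega> / c) (xs m))))"
proof -
  define f where "f y = - pmass M X y * ln (pmass M X y)" for y
  define T where "T = range (\<lambda>m. c * xs m)"
  have pm: "pmass M X (c * x) = pmass M (\<lambda>\<omega>. X \<omega> / c) x" for x
  proof -
    have "{\<omega> \<in> space M. X \<omega> = c * x} = {\<omega> \<in> space M. X \<omega> / c = x}" using c by (auto simp: field_simps)
    then show ?thesis by (simp add: pmass_def)
  qed
  have out: "f y = 0" if "y \<notin> T" for y
  proof -
    have ne: "X \<omega> \<noteq> y" if om: "\<omega> \<in> space M" for \<omega>
    proof
      assume xy: "X \<omega> = y"
      obtain m where "X \<omega> / c = xs m" using rng[OF om] by blast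
      then have "y = c * xs m" using c xy by (simp add: field_simps)
      then show False using \<open>y \<notin> T\<close> by (auto simp: T_def)
    qed
    have e: "{\<omega> \<in> space M. X \<omega> = y} = {}" using ne by auto
    show ?thesis unfolding f_def pmass_def e by simp
  qed
  have "disc_entropy M X = infsum f UNIV" unfolding disc_entropy_def f_def ..
  also have "\<dots> = infsum f T"
    by (rule infsum_cong_neutral) (use out in auto)
  also have "\<dots> = infsum (f \<circ> (\<lambda>m. c * xs m)) UNIV"
    unfolding T_def by (rule infsum_reindex) (use inj c in \<open>auto simp: inj_def\<close>)
  also have "\<dots> = infsum (\<lambda>m. - (pmass M (\<lambda>\<omega>. X \<omega> / c) (xs m) * ln (pmass M (\<lambda>\<omega>. X \<omega> / c) (xs m)))) UNIV"
    by (simp add: f_def pm o_def)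
  also have "\<dots> = (\<Sum>m. - (pmass M (\<lambda>\<omega>. X \<omega> / c) (xs m) * ln (pmass M (\<lambda>\<omega>. X \<omega> / c) (xs m))))"
    by (rule infsum_nat_suminf) (use sm nn in simp)
  finally show ?thesis .
qed

lemma indep_YU:
  fixes M :: "'a measure" and w :: "nat \<Rightarrow> 'a \<Rightarrow> real" and U :: "'a \<Rightarrow> real" and c :: real
  assumes P: "prob_space M"
    and ind: "prob_space.indep_vars M (\<lambda>_. borel)
              (\<lambda>j. case j of None \<Rightarrow> U | Some i \<Rightarrow> w i) (insert None (Some ` {1..}))"
  shows "prob_space.indep_var M borel (\<lambda>\<omega>. (\<Sum>i=1..n. w i \<omega>) / c) borel U"
    and "U \<in> borel_measurable M"
proof -
  interpret prob_space M by fact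
  define V where "V = (\<lambda>j. case j of None \<Rightarrow> U | Some i \<Rightarrow> w i)"
  have ind': "indep_vars (\<lambda>_. borel) V (insert None (Some ` {1..}))" using ind by (simp add: V_def)
  show "U \<in> borel_measurable M"
    using ind' unfolding indep_vars_def by (auto simp: V_def)
  have "indep_var (Pi\<^sub>M (Some ` {1..n}) (\<lambda>_. borel)) (\<lambda>\<omega>. restrict (\<lambda>i. V i \<omega>) (Some ` {1..n}))
                  (Pi\<^sub>M {None} (\<lambda>_. borel)) (\<lambda>\<omega>. restrict (\<lambda>i. V i \<omega>) {None})"
    by (rule indep_var_restrict[OF ind']) auto
  then have "indep_var borel ((\<lambda>f. (\<Sum>i=1..n. f (Some i)) / c) \<circ> (\<lambda>\<omega>. restrict (\<lambda>i. V i \<omega>) (Some ` {1..n})))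
                  borel ((\<lambda>f. f None) \<circ> (\<lambda>\<omega>. restrict (\<lambda>i. V i \<omega>) {None}))"
  proof (rule indep_var_compose)
    have "(\<lambda>f. \<Sum>i=1..n. f (Some i)) \<in> borel_measurable (Pi\<^sub>M (Some ` {1..n}) (\<lambda>_. borel :: real measure))"
      by (rule borel_measurable_sum) (rule measurable_component_singleton, auto)
    then show "(\<lambda>f. (\<Sum>i=1..n. f (Some i)) / c) \<in> borel_measurable (Pi\<^sub>M (Some ` {1..n}) (\<lambda>_. borel :: real measure))"
      by measurable
    show "(\<lambda>f. f None) \<in> measurable (Pi\<^sub>M {None} (\<lambda>_. borel :: real measure)) borel"
      by (rule measurable_component_singleton) auto
  qed
  moreover have "((\<lambda>f. (\<Sum>i=1..n. f (Some i)) / c) \<circ> (\<lambda>\<omega>. restrict (\<lambda>i. V i \<omega>) (Some ` {1..n}))) = (\<lambda>\<omega>. (\<Sum>i=1..n. w i \<omega>) / c)"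
    by (rule ext) (simp add: V_def)
  moreover have "((\<lambda>f. f None) \<circ> (\<lambda>\<omega>. restrict (\<lambda>i. V i \<omega>) {None})) = U"
    by (rule ext) (simp add: V_def)
  ultimately show "indep_var borel (\<lambda>\<omega>. (\<Sum>i=1..n. w i \<omega>) / c) borel U" by simp
qed

theorem lemma3p1:
  fixes M :: "'a measure" and w :: "nat \<Rightarrow> 'a \<Rightarrow> real" and a l :: real
  assumes P: "prob_space M"
    and a: "a \<ge> 0" and l: "l > 0"
    and lattice: "\<forall>i\<ge>1. \<forall>\<omega>\<in>space M. w i \<omega> \<in> range (\<lambda>k::int. a + of_int k * l)"
    and indep: "prob_space.indep_vars M (\<lambda>_. borel) w {1..}"
    and finvar: "\<forall>i\<ge>1. integrable M (\<lambda>\<omega>. (w i \<omega>)\<^sup>2)"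
    and mean0: "\<forall>i\<ge>1. rv_mean M (w i) = 0"
  defines "s \<equiv> \<lambda>n::nat. sqrt (\<Sum>i=1..n. rv_var M (w i))"
    and "S \<equiv> \<lambda>(n::nat) \<omega>. \<Sum>i=1..n. w i \<omega>"
  shows
    "(\<forall>n\<ge>1. s n > 0 \<longrightarrow>
        \<bar>dkl_lattice M (\<lambda>\<omega>. S n \<omega> / s n) (real n * a / s n) (l / s n)
          - (1/2 * ln (2 * pi * exp 1) - (disc_entropy M (S n) - ln (s n / l)))\<bar>
          \<le> l / s n + l\<^sup>2 / (2 * (s n)\<^sup>2))
     \<and> (\<forall>U :: 'a \<Rightarrow> real.
          prob_space.indep_vars M (\<lambda>_. borel)
              (\<lambda>j. case j of None \<Rightarrow> U | Some i \<Rightarrow> w i) (insert None (Some ` {1..}))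
          \<and> distr M lborel U = uniform_measure lborel {-1/2<..<1/2}
          \<longrightarrow> (\<forall>n\<ge>1. s n > 0 \<longrightarrow>
                \<bar>dkl_lattice M (\<lambda>\<omega>. S n \<omega> / s n) (real n * a / s n) (l / s n)
                  - dkl_cont M (\<lambda>\<omega>. S n \<omega> / s n + l / s n * U \<omega>)\<bar>
                  \<le> l / s n + 13 * l\<^sup>2 / (24 * (s n)\<^sup>2)))"
proof -
  interpret prob_space M by fact
  have basic: "(\<lambda>\<omega>. S n \<omega> / s n) \<in> borel_measurable M
      \<and> (\<forall>\<omega>\<in>space M. \<exists>k::int. S n \<omega> / s n = real n * a / s n + of_int k * (l / s n))
      \<and> integrable M (\<lambda>\<omega>. (S n \<omega> / s n)\<^sup>2)
      \<and> rv_mean M (\<lambda>\<omega>. S n \<omega> / s n) = 0 \<and> rv_var M (\<lambda>\<omega>. S n \<omega> / s n) = 1"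
    if sn: "s n > 0" for n
  proof -
    note SM = S_moments[OF P indep finvar mean0, of n]
    have Sv: "(s n)\<^sup>2 = (\<integral>\<omega>. (S n \<omega>)\<^sup>2 \<partial>M)"
    proof -
      have "(\<Sum>i=1..n. rv_var M (w i)) > 0" using sn by (simp add: s_def)
      then show ?thesis using SM(5) by (simp add: s_def S_def)
    qed
    have m1: "(\<lambda>\<omega>. S n \<omega> / s n) \<in> borel_measurable M" using SM(1) by (simp add: S_def)
    have m2: "\<forall>\<omega>\<in>space M. \<exists>k::int. S n \<omega> / s n = real n * a / s n + of_int k * (l / s n)"
    proof
      fix \<omega> assume om: "\<omega> \<in> space M"
      obtain k :: int where k: "S n \<omega> = real n * a + of_int k * l"
        using S_lattice[OF lattice om, of n] by (auto simp: S_def)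
      show "\<exists>k::int. S n \<omega> / s n = real n * a / s n + of_int k * (l / s n)"
        by (intro exI[of _ k]) (simp add: k add_divide_distrib)
    qed
    have i2: "integrable M (\<lambda>\<omega>. (S n \<omega> / s n)\<^sup>2)"
      using SM(3) by (simp add: S_def power_divide)
    have mean: "rv_mean M (\<lambda>\<omega>. S n \<omega> / s n) = 0"
      using SM(4) by (simp add: rv_mean_def S_def)
    have var: "rv_var M (\<lambda>\<omega>. S n \<omega> / s n) = 1"
    proof -
      have "rv_var M (\<lambda>\<omega>. S n \<omega> / s n) = (\<integral>\<omega>. (S n \<omega>)\<^sup>2 / (s n)\<^sup>2 \<partial>M)"
        using mean by (simp add: rv_var_def power_divide)
      also have "\<dots> = (\<integral>\<omega>. (S n \<omega>)\<^sup>2 \<partial>M) / (s n)\<^sup>2" by simp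
      also have "\<dots> = (s n)\<^sup>2 / (s n)\<^sup>2" by (simp only: Sv)
      also have "\<dots> = 1" using sn by simp
      finally show ?thesis .
    qed
    show ?thesis using m1 m2 i2 mean var by blast
  qed
  have dpos: "l / s n > 0" if "s n > 0" for n using l that by simp
  have common: "\<exists>Sg R. \<bar>R\<bar> \<le> l / s n + (l / s n)\<^sup>2/2 \<and>
      dkl_lattice M (\<lambda>\<omega>. S n \<omega> / s n) (real n * a / s n) (l / s n) = Sg - ln (l / s n) + ln (sqrt (2*pi)) + 1/2 + R \<and>
      disc_entropy M (S n) = - Sg \<and>
      (\<forall>U. U \<in> borel_measurable M \<longrightarrow> prob_space.indep_var M borel (\<lambda>\<omega>. S n \<omega> / s n) borel U \<longrightarrow>
           distr M lborel U = uniform_measure lborel {-1/2<..<1/2::real} \<longrightarrow>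
           dkl_cont M (\<lambda>\<omega>. S n \<omega> / s n + l / s n * U \<omega>) = Sg - ln (l / s n) + ln (sqrt (2 * pi * (1 + (l / s n)\<^sup>2/12))) + 1/2)"
    if sn: "s n > 0" for n
  proof -
    have B: "(\<lambda>\<omega>. S n \<omega> / s n) \<in> borel_measurable M"
      "\<And>\<omega>. \<omega> \<in> space M \<Longrightarrow> \<exists>k::int. S n \<omega> / s n = real n * a / s n + of_int k * (l / s n)"
      "integrable M (\<lambda>\<omega>. (S n \<omega> / s n)\<^sup>2)"
      "rv_mean M (\<lambda>\<omega>. S n \<omega> / s n) = 0" "rv_var M (\<lambda>\<omega>. S n \<omega> / s n) = 1"
      using basic[OF sn] by blast+
    define d where "d = l / s n"
    define b where "b = real n * a / s n"
    have d: "d > 0" using dpos[OF sn] by (simp add: d_def)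
    define xs where "xs = (\<lambda>m. b + real_of_int (int_decode m) * d)"
    define p where "p = (\<lambda>m. pmass M (\<lambda>\<omega>. S n \<omega> / s n) (xs m))"
    note P1 = part1[OF P B(1) d[unfolded d_def] B(2) B(3) B(4) B(5), folded d_def b_def, folded xs_def, folded p_def]
    obtain R where R: "\<bar>R\<bar> \<le> d + d\<^sup>2/2"
      and D: "dkl_lattice M (\<lambda>\<omega>. S n \<omega> / s n) b d = (\<Sum>m. p m * ln (p m)) - ln d + ln (sqrt (2*pi)) + 1/2 + R"
      using P1(3) unfolding p_def xs_def by blast
    have inj: "inj xs" using d by (auto simp: xs_def inj_def int_decode_eq)
    have rng: "S n \<omega> / s n \<in> range xs" if om: "\<omega> \<in> space M" for \<omega>
    proof -
      obtain k :: int where "S n \<omega> / s n = b + of_int k * d" using B(2)[OF om] by (auto simp: b_def d_def)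
      then have "S n \<omega> / s n = xs (int_encode k)" by (simp add: xs_def)
      then show ?thesis by blast
    qed
    have H: "disc_entropy M (S n) = (\<Sum>m. - (p m * ln (p m)))"
      unfolding p_def by (rule entropy_reindex[OF sn inj rng]) (use P1(1,2) in \<open>simp_all add: p_def xs_def\<close>)
    have H': "disc_entropy M (S n) = - (\<Sum>m. p m * ln (p m))"
      unfolding H by (rule suminf_minus) (use summable_minus[OF P1(1)] in \<open>simp add: p_def xs_def\<close>)
    have C2: "dkl_cont M (\<lambda>\<omega>. S n \<omega> / s n + l / s n * U \<omega>) =
        (\<Sum>m. p m * ln (p m)) - ln d + ln (sqrt (2 * pi * (1 + d\<^sup>2/12))) + 1/2"
      if Um: "U \<in> borel_measurable M" and iU: "prob_space.indep_var M borel (\<lambda>\<omega>. S n \<omega> / s n) borel U"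
        and uU: "distr M lborel U = uniform_measure lborel {-1/2<..<1/2::real}" for U
      using part2[OF P B(1) d[unfolded d_def] B(2) B(3) B(4) B(5) Um iU uU, folded d_def b_def, folded xs_def, folded p_def]
      by (simp add: p_def xs_def d_def)
    show ?thesis
      by (intro exI[of _ "\<Sum>m. p m * ln (p m)"] exI[of _ R] conjI allI impI)
         (use R D H' C2 in \<open>simp_all add: d_def b_def\<close>)
  qed
  show ?thesis
  proof (intro conjI allI impI)
    fix n :: nat assume n1: "n \<ge> 1" and sn: "s n > 0"
    obtain Sg R where R: "\<bar>R\<bar> \<le> l / s n + (l / s n)\<^sup>2/2"
      and D: "dkl_lattice M (\<lambda>\<omega>. S n \<omega> / s n) (real n * a / s n) (l / s n) = Sg - ln (l / s n) + ln (sqrt (2*pi)) + 1/2 + R"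
      and H: "disc_entropy M (S n) = - Sg"
      using common[OF sn] by blast
    have e: "dkl_lattice M (\<lambda>\<omega>. S n \<omega> / s n) (real n * a / s n) (l / s n)
          - (1/2 * ln (2 * pi * exp 1) - (disc_entropy M (S n) - ln (s n / l))) = R"
      unfolding D H using l sn by (simp add: ln_div ln_mult ln_sqrt field_simps)
    show "\<bar>dkl_lattice M (\<lambda>\<omega>. S n \<omega> / s n) (real n * a / s n) (l / s n)
          - (1/2 * ln (2 * pi * exp 1) - (disc_entropy M (S n) - ln (s n / l)))\<bar>
          \<le> l / s n + l\<^sup>2 / (2 * (s n)\<^sup>2)"
      unfolding e using R by (simp add: power_divide)
  next
    fix U :: "'a \<Rightarrow> real" and n :: nat
    assume U: "prob_space.indep_vars M (\<lambda>_. borel)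
              (\<lambda>j. case j of None \<Rightarrow> U | Some i \<Rightarrow> w i) (insert None (Some ` {1..})) \<and>
          distr M lborel U = uniform_measure lborel {-1/2<..<1/2}"
      and n1: "n \<ge> 1" and sn: "s n > 0"
    have indU: "prob_space.indep_vars M (\<lambda>_. borel)
              (\<lambda>j. case j of None \<Rightarrow> U | Some i \<Rightarrow> w i) (insert None (Some ` {1..}))"
      and uU: "distr M lborel U = uniform_measure lborel {-1/2<..<1/2}" using U by auto
    have iYU: "prob_space.indep_var M borel (\<lambda>\<omega>. S n \<omega> / s n) borel U"
      using indep_YU(1)[OF P indU, of n "s n"] by (simp add: S_def)
    have Um: "U \<in> borel_measurable M" by (rule indep_YU(2)[OF P indU])
    obtain Sg R where R: "\<bar>R\<bar> \<le> l / s n + (l / s n)\<^sup>2/2"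
      and D: "dkl_lattice M (\<lambda>\<omega>. S n \<omega> / s n) (real n * a / s n) (l / s n) = Sg - ln (l / s n) + ln (sqrt (2*pi)) + 1/2 + R"
      and C: "\<forall>U. U \<in> borel_measurable M \<longrightarrow> prob_space.indep_var M borel (\<lambda>\<omega>. S n \<omega> / s n) borel U \<longrightarrow>
           distr M lborel U = uniform_measure lborel {-1/2<..<1/2::real} \<longrightarrow>
           dkl_cont M (\<lambda>\<omega>. S n \<omega> / s n + l / s n * U \<omega>) = Sg - ln (l / s n) + ln (sqrt (2 * pi * (1 + (l / s n)\<^sup>2/12))) + 1/2"
      using common[OF sn] by blast
    define d where "d = l / s n"
    define v where "v = 1 + d\<^sup>2/12"
    have v: "v > 0" by (simp add: v_def add_pos_nonneg)
    have Dc: "dkl_cont M (\<lambda>\<omega>. S n \<omega> / s n + l / s n * U \<omega>) = Sg - ln d + ln (sqrt (2 * pi * v)) + 1/2"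
      using C Um iYU uU by (simp add: d_def v_def)
    have e: "dkl_lattice M (\<lambda>\<omega>. S n \<omega> / s n) (real n * a / s n) (l / s n)
          - dkl_cont M (\<lambda>\<omega>. S n \<omega> / s n + l / s n * U \<omega>) = R - ln v / 2"
      unfolding D Dc using v by (simp add: ln_mult ln_sqrt d_def field_simps)
    have lv0: "0 \<le> ln v" using v by (simp add: v_def)
    have lv1: "ln v \<le> d\<^sup>2/12" using ln_le_minus_one[OF v] by (simp add: v_def)
    have R': "\<bar>R\<bar> \<le> d + d\<^sup>2/2" using R by (simp add: d_def)
    have "\<bar>R - ln v / 2\<bar> \<le> d + 13 * d\<^sup>2 / 24"
      using R' lv0 lv1 by (simp add: abs_le_iff)
    then show "\<bar>dkl_lattice M (\<lambda>\<omega>. S n \<omega> / s n) (real n * a / s n) (l / s n)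
                  - dkl_cont M (\<lambda>\<omega>. S n \<omega> / s n + l / s n * U \<omega>)\<bar>
                  \<le> l / s n + 13 * l\<^sup>2 / (24 * (s n)\<^sup>2)"
      unfolding e by (simp add: d_def power_divide)
  qed
qed

end
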